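(* If $Z_1,\dots,Z_S$ are i.i.d. $\mathcal N(0,1)$ random variables, then for every $\varepsilon\in(0,1)$, $$\mathrm P\left[\left|\frac1S\sum_{s=1}^S Z_s^2-1-\left(\frac1S\sum_{s=1}^S Z_s\right)^2\right|\ge\varepsilon\right]\le 3\exp\left\{\frac{-S\varepsilon^2}{25}\right\}.$$ *)

theory Defs
  imports "HOL-Probability.Probability"
begin

end

theory Submission
  imports Defs
begin


lemma nd_sq:
  fixes c :: real assumes "c < 1/2"
  shows "std_normal_density x * exp (c * x\<^sup>2) = (1 / sqrt (1 - 2*c)) * normal_density 0 (1 / sqrt (1 - 2*c)) x"
proof -
  define q where "q = sqrt (1 - 2*c)"
  have q: "q > 0" "q\<^sup>2 = 1 - 2*c" unfolding q_def using assms by auto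
  have s: "sqrt (2 * pi * (1/q)\<^sup>2) = sqrt (2*pi) / q"
  proof -
    have "sqrt ((1/q)\<^sup>2) = 1/q" using q(1) by simp
    then show ?thesis by (simp add: real_sqrt_mult)
  qed
  have e: "- x\<^sup>2 / 2 + c * x\<^sup>2 = -(x - 0)\<^sup>2 / (2 * (1/q)\<^sup>2)"
  proof -
    have "-(x - 0)\<^sup>2 / (2 * (1/q)\<^sup>2) = - x\<^sup>2 * q\<^sup>2 / 2" using q(1) by (simp add: power_divide)
    also have "\<dots> = - x\<^sup>2 / 2 + c * x\<^sup>2" unfolding q(2) by (simp add: field_simps)
    finally show ?thesis by simp
  qed
  define E where "E = exp (-(x - 0)\<^sup>2 / (2 * (1/q)\<^sup>2))"
  have ex: "exp (- x\<^sup>2 / 2) * exp (c * x\<^sup>2) = E" unfolding mult_exp_exp e E_def ..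
  have l: "std_normal_density x * exp (c * x\<^sup>2) = 1 / sqrt (2 * pi) * E"
    by (simp only: std_normal_density_def mult.assoc ex)
  have r: "1/q * (1 / (sqrt (2*pi) / q) * E) = 1 / sqrt (2 * pi) * E" using q by simp
  show ?thesis
    unfolding l by (unfold normal_density_def q_def[symmetric] s E_def[symmetric] r) (rule refl)
qed

lemma nd_lin:
  fixes l :: real
  shows "std_normal_density x * exp (l * x) = exp (l\<^sup>2/2) * normal_density l 1 x"
proof -
  have e: "- x\<^sup>2 / 2 + l * x = l\<^sup>2/2 + (-(x - l)\<^sup>2 / (2 * 1\<^sup>2))"
  proof -
    have "l * x - x\<^sup>2 / 2 = l\<^sup>2 / 2 - (x - l)\<^sup>2 / (2::real)"
    proof -
      have "(x - l)\<^sup>2 = x\<^sup>2 - 2*l*x + l\<^sup>2" by (simp add: power2_eq_square algebra_simps)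
      then show ?thesis by linarith
    qed
    then show ?thesis by simp
  qed
  have ex: "exp (- x\<^sup>2 / 2) * exp (l * x) = exp (l\<^sup>2/2) * exp (-(x - l)\<^sup>2 / (2 * 1\<^sup>2))"
    unfolding mult_exp_exp e ..
  have "std_normal_density x * exp (l * x) = 1 / sqrt (2 * pi) * (exp (l\<^sup>2/2) * exp (-(x - l)\<^sup>2 / (2 * 1\<^sup>2)))"
    unfolding std_normal_density_def mult.assoc ex ..
  then show ?thesis
    unfolding normal_density_def by simp
qed

lemma nn_normal: "s > 0 \<Longrightarrow> (\<integral>\<^sup>+x. ennreal (normal_density m s x) \<partial>lborel) = 1"
  by (subst nn_integral_eq_integral) auto

lemma mgf_gen:
  assumes "distributed M lborel X std_normal_density"
    and "\<And>x. std_normal_density x * exp (g x) = k * normal_density m s x" "k \<ge> 0" "s > 0"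
    and [measurable]: "g \<in> borel_measurable borel"
  shows "(\<integral>\<^sup>+\<omega>. ennreal (exp (g (X \<omega>))) \<partial>M) = ennreal k"
proof -
  have "(\<integral>\<^sup>+\<omega>. ennreal (exp (g (X \<omega>))) \<partial>M) = (\<integral>\<^sup>+x. ennreal (std_normal_density x) * ennreal (exp (g x)) \<partial>lborel)"
    by (rule distributed_nn_integral[symmetric, OF assms(1)]) simp
  also have "\<dots> = (\<integral>\<^sup>+x. ennreal k * ennreal (normal_density m s x) \<partial>lborel)"
    using assms(2,3) by (simp add: ennreal_mult[symmetric])
  also have "\<dots> = ennreal k"
    by (subst nn_integral_cmult) (use assms(4) in \<open>auto simp: nn_normal\<close>)
  finally show ?thesis .
qed

lemma (in prob_space) chernoff_sum:
  fixes Y :: "nat \<Rightarrow> 'a \<Rightarrow> real"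
  assumes fin: "finite I" and indep: "indep_vars (\<lambda>_. borel) Y I" and l: "l > 0"
    and mgf: "\<And>i. i \<in> I \<Longrightarrow> (\<integral>\<^sup>+x. ennreal (exp (l * Y i x)) \<partial>M) = ennreal m" and m: "m \<ge> 0"
  shows "prob {x\<in>space M. (\<Sum>i\<in>I. Y i x) \<ge> a} \<le> exp (-l*a) * m ^ card I"
proof -
  have rv[measurable]: "random_variable borel (Y i)" if "i \<in> I" for i
    using that indep unfolding indep_vars_def by blast
  have "ennreal (prob {x\<in>space M. (\<Sum>i\<in>I. Y i x) \<ge> a}) = emeasure M {x\<in>space M. (\<Sum>i\<in>I. Y i x) \<ge> a}"
    by (simp add: emeasure_eq_measure)
  also have "\<dots> \<le> ennreal (exp (-l*a)) * (\<integral>\<^sup>+x\<in>space M. exp (l * (\<Sum>i\<in>I. Y i x)) \<partial>M)"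
    by (intro Chernoff_ineq_nn_integral_ge l) auto
  also have "(\<integral>\<^sup>+x\<in>space M. exp (l * (\<Sum>i\<in>I. Y i x)) \<partial>M) =
             (\<integral>\<^sup>+x. (\<Prod>i\<in>I. ennreal (exp (l * Y i x))) \<partial>M)"
    by (intro nn_integral_cong)
       (simp_all add: sum_distrib_left exp_sum fin prod_ennreal)
  also have "\<dots> = (\<Prod>i\<in>I. \<integral>\<^sup>+x. ennreal (exp (l * Y i x)) \<partial>M)"
    by (intro indep_vars_nn_integral fin indep_vars_compose2[OF indep]) auto
  also have "\<dots> = (\<Prod>i\<in>I. ennreal m)"
    by (intro prod.cong refl mgf)
  also have "ennreal (exp (-l*a)) * \<dots> = ennreal (exp (-l*a) * m ^ card I)"
    using m by (simp add: prod_ennreal ennreal_mult ennreal_power)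
  finally show ?thesis
    by (subst (asm) ennreal_le_iff) (use m in auto)
qed



lemma incl_pt:
  fixes n T U e :: real
  assumes n: "n > 0" and e: "0 < e" "e < 1"
    and h: "e \<le> \<bar>(1/n) * T - 1 - ((1/n) * U)\<^sup>2\<bar>"
  shows "n * (1 + e) \<le> T \<or> - (n * (1 - 3*e/4)) \<le> - T \<or> n * e / 2 \<le> U \<or> n * e / 2 \<le> - U"
proof -
  define A where "A = T / n"
  define B where "B = U / n"
  have TA: "T = n * A" and UB: "U = n * B" using n by (auto simp: A_def B_def)
  have h': "e \<le> \<bar>A - 1 - B\<^sup>2\<bar>" using h by (simp add: A_def B_def)
  show ?thesis
  proof (cases "B \<ge> e/2 \<or> B \<le> - e/2")
    case True
    then show ?thesis
    proof
      assume "B \<ge> e/2" then have "n * (e/2) \<le> n * B" using n by (intro mult_left_mono) auto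
      then show ?thesis unfolding UB by auto
    next
      assume "B \<le> - e/2" then have "n * (e/2) \<le> n * (-B)" using n by (intro mult_left_mono) auto
      then show ?thesis unfolding UB by auto
    qed
  next
    case False
    then have "\<bar>B\<bar> < e/2" by auto
    then have "B\<^sup>2 \<le> (e/2)\<^sup>2" using power_mono[of "\<bar>B\<bar>" "e/2" 2] by simp
    also have "(e/2)\<^sup>2 \<le> e/4" using e by (simp add: power2_eq_square)
    finally have Bs: "B\<^sup>2 \<le> e/4" .
    have "B\<^sup>2 \<ge> 0" by simp
    from h' consider "A - 1 - B\<^sup>2 \<ge> e" | "A - 1 - B\<^sup>2 \<le> - e" by linarith
    then show ?thesis
    proof cases
      case 1
      then have "1 + e \<le> A" using \<open>B\<^sup>2 \<ge> 0\<close> by linarith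
      then have "n * (1 + e) \<le> n * A" using n by (intro mult_left_mono) auto
      then show ?thesis unfolding TA by auto
    next
      case 2
      then have "A \<le> 1 - 3*e/4" using Bs by linarith
      then have "n * A \<le> n * (1 - 3*e/4)" using n by (intro mult_left_mono) auto
      then show ?thesis unfolding TA by auto
    qed
  qed
qed

lemma tail_num:
  fixes m k l a :: real
  assumes "0 \<le> m" "m \<le> exp k"
  shows "exp (-l*a) * m ^ S \<le> exp (real S * k - l*a)"
proof -
  have "m ^ S \<le> exp k ^ S" using assms by (intro power_mono)
  also have "\<dots> = exp (real S * k)" by (simp add: exp_of_nat_mult)
  finally have "exp (-l*a) * m ^ S \<le> exp (-l*a) * exp (real S * k)" by (intro mult_left_mono) auto
  also have "\<dots> = exp (real S * k - l*a)" by (simp add: mult_exp_exp)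
  finally show ?thesis .
qed

lemma inv_exp: "1 / exp (- k) = exp (k::real)" by (simp add: exp_minus divide_inverse)

lemma m1_bound:
  fixes e :: real assumes "0 < e" "e < 1"
  shows "1 / sqrt (1 - 2*(e/6)) \<le> exp (e/6 + e\<^sup>2/9)"
proof -
  have "- (e/3) - 2 * (e/3)\<^sup>2 \<le> ln (1 - e/3)"
    using assms by (intro ln_one_minus_pos_lower_bound) auto
  then have "exp (-(2*(e/6 + e\<^sup>2/9))) \<le> exp (ln (1 - e/3))"
    by (simp add: power2_eq_square field_simps)
  also have "\<dots> = 1 - e/3" using assms by simp
  finally have "exp (-(e/6 + e\<^sup>2/9)) ^ 2 \<le> 1 - 2*(e/6)"
    by (simp add: exp_of_nat_mult[symmetric])
  then have "exp (-(e/6 + e\<^sup>2/9)) \<le> sqrt (1 - 2*(e/6))"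
    by (simp add: real_le_rsqrt)
  then have "1 / sqrt (1 - 2*(e/6)) \<le> 1 / exp (-(e/6 + e\<^sup>2/9))"
    using assms by (intro divide_left_mono) (auto intro!: mult_pos_pos)
  then show ?thesis unfolding inv_exp .
qed

lemma m2_bound:
  fixes l :: real assumes "0 < l" "2*l \<le> 1"
  shows "1 / sqrt (1 - 2*(-l)) \<le> exp (-l + 2*l\<^sup>2)"
proof -
  have "2*l - (2*l)\<^sup>2 \<le> ln (1 + 2*l)"
    using assms by (intro ln_one_plus_pos_lower_bound) auto
  then have "exp (-(2*(-l + 2*l\<^sup>2))) \<le> exp (ln (1 + 2*l))"
    by (simp add: power2_eq_square field_simps)
  also have "\<dots> = 1 + 2*l" using assms by simp
  finally have "exp (-(-l + 2*l\<^sup>2)) ^ 2 \<le> 1 - 2*(-l)"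
    by (simp add: exp_of_nat_mult[symmetric])
  then have "exp (-(-l + 2*l\<^sup>2)) \<le> sqrt (1 - 2*(-l))"
    by (simp add: real_le_rsqrt)
  then have "1 / sqrt (1 - 2*(-l)) \<le> 1 / exp (-(-l + 2*l\<^sup>2))"
    using assms by (intro divide_left_mono) (auto intro!: mult_pos_pos)
  then show ?thesis unfolding inv_exp .
qed

lemma final_num:
  fixes u :: real assumes "u > 25"
  shows "exp (-u/18) + exp (-9*u/128) + exp (-u/8) + exp (-u/8) \<le> 3 * exp (-u/25)"
proof -
  have 1: "exp (-u/18) \<le> exp (-u/25)" using assms by simp
  have 2: "exp (-9*u/128) \<le> exp (-u/25)" using assms by simp
  have "exp (-u/8) = exp (-u/25) * exp (-17*u/200)" by (simp add: mult_exp_exp)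
  also have "exp (-17*u/200) \<le> exp (-2)" using assms by simp
  also have "exp (-2::real) \<le> 1/2"
  proof -
    have "1 + 2 \<le> exp (2::real)" by (rule exp_ge_add_one_self_aux) simp
    then show ?thesis by (simp add: exp_minus divide_simps)
  qed
  finally have 3: "exp (-u/8) \<le> exp (-u/25) / 2" by simp
  show ?thesis using 1 2 3 by linarith
qed


lemma meas_sum:
  fixes Z :: "nat \<Rightarrow> 'a \<Rightarrow> real" and h :: "real \<Rightarrow> real"
  assumes "\<And>s. s \<in> I \<Longrightarrow> Z s \<in> borel_measurable M" and [measurable]: "h \<in> borel_measurable borel"
  shows "(\<lambda>x. \<Sum>s\<in>I. h (Z s x)) \<in> borel_measurable M"
proof (intro borel_measurable_sum)
  fix i assume "i \<in> I"
  then have [measurable]: "Z i \<in> borel_measurable M" by (rule assms(1))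
  show "(\<lambda>x. h (Z i x)) \<in> borel_measurable M" by measurable
qed

lemma ind_comp:
  fixes Z :: "nat \<Rightarrow> 'a \<Rightarrow> real" and h :: "real \<Rightarrow> real"
  assumes "prob_space M" "prob_space.indep_vars M (\<lambda>_. borel) Z I" "h \<in> borel_measurable borel"
  shows "prob_space.indep_vars M (\<lambda>_. borel) (\<lambda>s x. h (Z s x)) I"
  using prob_space.indep_vars_compose2[OF assms(1,2), of "\<lambda>_. h" "\<lambda>_. borel"] assms(3) by simp

theorem lemma6:
  fixes M :: "'a measure" and Z :: "nat \<Rightarrow> 'a \<Rightarrow> real" and S :: nat and \<epsilon> :: real
  assumes "prob_space M"
    and "prob_space.indep_vars M (\<lambda>_. borel) Z {1..S}"
    and "\<And>s. s \<in> {1..S} \<Longrightarrow> distributed M lborel (Z s) std_normal_density"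
    and "0 < \<epsilon>" and "\<epsilon> < 1"
  shows "measure M {\<omega> \<in> space M.
           \<bar>(1 / real S) * (\<Sum>s=1..S. (Z s \<omega>)\<^sup>2) - 1 - ((1 / real S) * (\<Sum>s=1..S. Z s \<omega>))\<^sup>2\<bar> \<ge> \<epsilon>}
         \<le> 3 * exp (- real S * \<epsilon>\<^sup>2 / 25)"
proof -
  interpret prob_space M by fact
  have indep: "indep_vars (\<lambda>_. borel) Z {1..S}" using assms(2) .
  have rv: "Z s \<in> borel_measurable M" if "s \<in> {1..S}" for s
    using that indep unfolding indep_vars_def by auto
  have e: "0 < \<epsilon>" "\<epsilon> < 1" using assms(4,5) by auto
  define u where "u = real S * \<epsilon>\<^sup>2"
  have rhs: "- real S * \<epsilon>\<^sup>2 / 25 = - u / 25" by (simp add: u_def)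
  let ?A = "{\<omega> \<in> space M.
           \<bar>(1 / real S) * (\<Sum>s=1..S. (Z s \<omega>)\<^sup>2) - 1 - ((1 / real S) * (\<Sum>s=1..S. Z s \<omega>))\<^sup>2\<bar> \<ge> \<epsilon>}"
  show ?thesis
  proof (cases "u \<le> 25")
    case True
    have "exp (-1) \<le> exp (-u/25)" using True by simp
    moreover have "1 \<le> 3 * exp (-1::real)" using exp_le by (simp add: exp_minus divide_simps)
    ultimately have "1 \<le> 3 * exp (-u/25)" by linarith
    moreover have "measure M ?A \<le> 1" by simp
    ultimately show ?thesis unfolding rhs by linarith
  next
    case False
    then have u: "u > 25" by simp
    have S: "real S > 0" using u e by (cases S) (auto simp: u_def)
    define E1 where "E1 = {x\<in>space M. real S * (1 + \<epsilon>) \<le> (\<Sum>s\<in>{1..S}. (Z s x)\<^sup>2)}"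
    define E2 where "E2 = {x\<in>space M. - (real S * (1 - 3*\<epsilon>/4)) \<le> (\<Sum>s\<in>{1..S}. - ((Z s x)\<^sup>2))}"
    define E3 where "E3 = {x\<in>space M. real S * \<epsilon> / 2 \<le> (\<Sum>s\<in>{1..S}. Z s x)}"
    define E4 where "E4 = {x\<in>space M. real S * \<epsilon> / 2 \<le> (\<Sum>s\<in>{1..S}. - Z s x)}"
    have m1[measurable]: "(\<lambda>x. \<Sum>s\<in>{1..S}. (Z s x)\<^sup>2) \<in> borel_measurable M"
      using meas_sum[of "{1..S}" Z M "\<lambda>y. y\<^sup>2"] rv by simp
    have m2[measurable]: "(\<lambda>x. \<Sum>s\<in>{1..S}. - ((Z s x)\<^sup>2)) \<in> borel_measurable M"
      using meas_sum[of "{1..S}" Z M "\<lambda>y. - (y\<^sup>2)"] rv by simp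
    have m3[measurable]: "(\<lambda>x. \<Sum>s\<in>{1..S}. Z s x) \<in> borel_measurable M"
      using meas_sum[of "{1..S}" Z M "\<lambda>y. y"] rv by simp
    have m4[measurable]: "(\<lambda>x. \<Sum>s\<in>{1..S}. - Z s x) \<in> borel_measurable M"
      using meas_sum[of "{1..S}" Z M "\<lambda>y. - y"] rv by simp
    have sets: "E1 \<in> sets M" "E2 \<in> sets M" "E3 \<in> sets M" "E4 \<in> sets M"
      unfolding E1_def E2_def E3_def E4_def by measurable
    have sub: "?A \<subseteq> E1 \<union> E2 \<union> E3 \<union> E4"
    proof
      fix x assume "x \<in> ?A"
      then have x: "x \<in> space M" and h: "\<epsilon> \<le> \<bar>(1 / real S) * (\<Sum>s=1..S. (Z s x)\<^sup>2) - 1 - ((1 / real S) * (\<Sum>s=1..S. Z s x))\<^sup>2\<bar>"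
        by auto
      from incl_pt[OF S e h] x show "x \<in> E1 \<union> E2 \<union> E3 \<union> E4"
        unfolding E1_def E2_def E3_def E4_def by (auto simp: sum_negf)
    qed
    have "measure M ?A \<le> measure M (E1 \<union> E2 \<union> E3 \<union> E4)"
      using sub sets by (intro finite_measure_mono) auto
    also have "\<dots> \<le> measure M E1 + measure M E2 + measure M E3 + measure M E4"
    proof -
      have "measure M (E1 \<union> E2 \<union> E3 \<union> E4) \<le> measure M (E1 \<union> E2 \<union> E3) + measure M E4"
        using sets by (intro measure_Un_le) auto
      also have "measure M (E1 \<union> E2 \<union> E3) \<le> measure M (E1 \<union> E2) + measure M E3"
        using sets by (intro measure_Un_le) auto
      also have "measure M (E1 \<union> E2) \<le> measure M E1 + measure M E2"
        using sets by (intro measure_Un_le) auto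
      finally show ?thesis by simp
    qed
    also have "\<dots> \<le> exp (-u/18) + exp (-9*u/128) + exp (-u/8) + exp (-u/8)"
    proof (intro add_mono)
      have cS: "card {1..S} = S" by simp
      show "measure M E1 \<le> exp (-u/18)"
      proof -
        define l where "l = \<epsilon>/6"
        define K where "K = 1 / sqrt (1 - 2*l)"
        have l: "l > 0" "l < 1/2" using e by (auto simp: l_def)
        have K: "K > 0" using l by (auto simp: K_def)
        have ind: "indep_vars (\<lambda>_. borel) (\<lambda>s x. (Z s x)\<^sup>2) {1..S}"
          proof -
            have hm: "(\<lambda>y::real. y\<^sup>2) \<in> borel_measurable borel" by measurable
            show ?thesis using ind_comp[OF assms(1,2) hm] .
          qed
        have nd: "std_normal_density x * exp (l * x\<^sup>2) = K * normal_density 0 K x" for x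
          unfolding K_def by (rule nd_sq) (use l in simp)
        have mgf: "(\<integral>\<^sup>+x. ennreal (exp (l * (Z i x)\<^sup>2)) \<partial>M) = ennreal K" if "i \<in> {1..S}" for i
          by (rule mgf_gen[OF assms(3)[OF that] nd less_imp_le[OF K] K]) measurable
        have mb: "K \<le> exp (\<epsilon>/6 + \<epsilon>\<^sup>2/9)" unfolding K_def l_def by (rule m1_bound[OF e])
        have "measure M E1 \<le> exp (-l * (real S * (1 + \<epsilon>))) * K ^ card {1..S}"
          unfolding E1_def by (rule chernoff_sum[OF _ ind l(1) mgf less_imp_le[OF K]]) simp_all
        also have "\<dots> \<le> exp (real S * (\<epsilon>/6 + \<epsilon>\<^sup>2/9) - l * (real S * (1 + \<epsilon>)))"
          unfolding cS by (rule tail_num[OF less_imp_le[OF K] mb])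
        also have "real S * (\<epsilon>/6 + \<epsilon>\<^sup>2/9) - l * (real S * (1 + \<epsilon>)) = -u/18"
          unfolding l_def u_def by (simp add: field_simps power2_eq_square)
        finally show ?thesis .
      qed
      show "measure M E2 \<le> exp (-9*u/128)"
      proof -
        define l where "l = 3*\<epsilon>/16"
        define K where "K = 1 / sqrt (1 - 2*(-l))"
        have l: "l > 0" "2*l \<le> 1" using e by (auto simp: l_def)
        have K: "K > 0" using l by (auto simp: K_def)
        have ind: "indep_vars (\<lambda>_. borel) (\<lambda>s x. - ((Z s x)\<^sup>2)) {1..S}"
          proof -
            have hm: "(\<lambda>y::real. - (y\<^sup>2)) \<in> borel_measurable borel" by measurable
            show ?thesis using ind_comp[OF assms(1,2) hm] .
          qed
        have nd: "std_normal_density x * exp ((-l) * x\<^sup>2) = K * normal_density 0 K x" for x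
          unfolding K_def by (rule nd_sq) (use l in simp)
        have mgf0: "(\<integral>\<^sup>+x. ennreal (exp ((-l) * (Z i x)\<^sup>2)) \<partial>M) = ennreal K" if "i \<in> {1..S}" for i
          by (rule mgf_gen[OF assms(3)[OF that] nd less_imp_le[OF K] K]) measurable
        have eq: "(-l) * y = l * - y" for y :: real by simp
        have mgf: "(\<integral>\<^sup>+x. ennreal (exp (l * - ((Z i x)\<^sup>2))) \<partial>M) = ennreal K" if "i \<in> {1..S}" for i
          using mgf0[OF that] unfolding eq .
        have mb: "K \<le> exp (-l + 2*l\<^sup>2)" unfolding K_def by (rule m2_bound[OF l])
        have "measure M E2 \<le> exp (-l * (- (real S * (1 - 3*\<epsilon>/4)))) * K ^ card {1..S}"
          unfolding E2_def by (rule chernoff_sum[OF _ ind l(1) mgf less_imp_le[OF K]]) simp_all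
        also have "\<dots> \<le> exp (real S * (-l + 2*l\<^sup>2) - l * (- (real S * (1 - 3*\<epsilon>/4))))"
          unfolding cS by (rule tail_num[OF less_imp_le[OF K] mb])
        also have "real S * (-l + 2*l\<^sup>2) - l * (- (real S * (1 - 3*\<epsilon>/4))) = -9*u/128"
          unfolding l_def u_def by (simp add: field_simps power2_eq_square)
        finally show ?thesis .
      qed
      show "measure M E3 \<le> exp (-u/8)"
      proof -
        define l where "l = \<epsilon>/2"
        define K where "K = exp (l\<^sup>2/2)"
        have l: "l > 0" using e by (auto simp: l_def)
        have K: "K > 0" by (auto simp: K_def)
        have ind: "indep_vars (\<lambda>_. borel) (\<lambda>s x. Z s x) {1..S}"
          using indep by simp
        have nd: "std_normal_density x * exp (l * x) = K * normal_density l 1 x" for x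
          unfolding K_def by (rule nd_lin)
        have mgf: "(\<integral>\<^sup>+x. ennreal (exp (l * Z i x)) \<partial>M) = ennreal K" if "i \<in> {1..S}" for i
          by (rule mgf_gen[OF assms(3)[OF that] nd less_imp_le[OF K]]) simp_all
        have mb: "K \<le> exp (l\<^sup>2/2)" unfolding K_def by simp
        have "measure M E3 \<le> exp (-l * (real S * \<epsilon> / 2)) * K ^ card {1..S}"
          unfolding E3_def by (rule chernoff_sum[OF _ ind l(1) mgf less_imp_le[OF K]]) simp_all
        also have "\<dots> \<le> exp (real S * (l\<^sup>2/2) - l * (real S * \<epsilon> / 2))"
          unfolding cS by (rule tail_num[OF less_imp_le[OF K] mb])
        also have "real S * (l\<^sup>2/2) - l * (real S * \<epsilon> / 2) = -u/8"
          unfolding l_def u_def by (simp add: field_simps power2_eq_square)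
        finally show ?thesis .
      qed
      show "measure M E4 \<le> exp (-u/8)"
      proof -
        define l where "l = \<epsilon>/2"
        define K where "K = exp ((-l)\<^sup>2/2)"
        have l: "l > 0" using e by (auto simp: l_def)
        have K: "K > 0" by (auto simp: K_def)
        have ind: "indep_vars (\<lambda>_. borel) (\<lambda>s x. - Z s x) {1..S}"
          proof -
            have hm: "(\<lambda>y::real. - y) \<in> borel_measurable borel" by measurable
            show ?thesis using ind_comp[OF assms(1,2) hm] .
          qed
        have nd: "std_normal_density x * exp ((-l) * x) = K * normal_density (-l) 1 x" for x
          unfolding K_def by (rule nd_lin)
        have mgf0: "(\<integral>\<^sup>+x. ennreal (exp ((-l) * Z i x)) \<partial>M) = ennreal K" if "i \<in> {1..S}" for i
          by (rule mgf_gen[OF assms(3)[OF that] nd less_imp_le[OF K]]) simp_all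
        have eq: "(-l) * y = l * - y" for y :: real by simp
        have mgf: "(\<integral>\<^sup>+x. ennreal (exp (l * - Z i x)) \<partial>M) = ennreal K" if "i \<in> {1..S}" for i
          using mgf0[OF that] unfolding eq .
        have mb: "K \<le> exp ((-l)\<^sup>2/2)" unfolding K_def by simp
        have "measure M E4 \<le> exp (-l * (real S * \<epsilon> / 2)) * K ^ card {1..S}"
          unfolding E4_def by (rule chernoff_sum[OF _ ind l(1) mgf less_imp_le[OF K]]) simp_all
        also have "\<dots> \<le> exp (real S * ((-l)\<^sup>2/2) - l * (real S * \<epsilon> / 2))"
          unfolding cS by (rule tail_num[OF less_imp_le[OF K] mb])
        also have "real S * ((-l)\<^sup>2/2) - l * (real S * \<epsilon> / 2) = -u/8"
          unfolding l_def u_def by (simp add: field_simps power2_eq_square)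
        finally show ?thesis .
      qed
    qed
    also have "\<dots> \<le> 3 * exp (-u/25)" by (rule final_num[OF u])
    finally show ?thesis unfolding rhs .
  qed
qed

end
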